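(* Let $\mathbf{k}$ be a field of characteristic $0$ and $M\ge0$. For $f\in\mathcal{P}^\Sigma_{d,n}$, $b\in\mathcal{P}^\Sigma_{d,m}$, $a\in\mathcal{P}^\Sigma_{e,n+m}$ and $g\in\mathrm{Inc}(\mathbf N)$, \[(f\cdot b)\ast_g a=(f\otimes b)\ast_g\Delta(a),\] i.e. writing $\Delta(a)=\sum a^{(1)}\otimes a^{(2)}$, one has $(f\cdot b)\ast_g a=\sum (f\ast_g a^{(1)})\cdot(b\ast_g a^{(2)})$.
   Context: $\mathcal{P}_{d,n}=(\bigwedge^d\mathbf{k}^{Md})^{\otimes n}$ ($\mathcal P_{d,0}=\mathbf k$), standard basis $v_1,\dots,v_{Md}$ of $\mathbf k^{Md}$. $\Sigma_n$ permutes tensor factors; $\mathcal P^\Sigma=\bigoplus_{d,n}\mathcal P^\Sigma_{d,n}$ with $\mathcal P^\Sigma_{d,n}$ the invariants. Shuffle: for a split $\sigma=(A,B)$ of $[n+m]$ (complementary $A=\{i_1<\dots<i_n\}$, $B=\{j_1<\dots<j_m\}$), $(u_1\otimes\cdots\otimes u_n)\cdot_\sigma(w_1\otimes\cdots\otimes w_m)=z_1\otimes\cdots\otimes z_{n+m}$, $z_{i_k}=u_k$, $z_{j_k}=w_k$; $f\cdot h=\sum_\sigma f\cdot_\sigma h$ over all such splits (same $d$ required, otherwise $0$). $\mathrm{Inc}(\mathbf N)$: strictly increasing maps $\mathbf N\to\mathbf N$; for $f\in\mathcal P_{d,n}$, $h\in\mathcal P_{e,n}$, $f\ast_g h=0$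 unless $g([Md])\subseteq[M(d+e)]$, and then with $g^c:[Me]\to[M(d+e)]$ the increasing bijection onto the complement of $g([Md])$, $(x_1\otimes\cdots\otimes x_n)\ast_g(y_1\otimes\cdots\otimes y_n)=\bigotimes_i(g(x_i)\wedge g^c(y_i))$ with $g(v_{s_1}\wedge\cdots\wedge v_{s_d})=v_{g(s_1)}\wedge\cdots\wedge v_{g(s_d)}$ (bilinear; $0$ when the numbers of tensor factors differ). Comultiplication $\Delta:\mathcal P^\Sigma\to\mathcal P^\Sigma\otimes_{\mathbf k}\mathcal P^\Sigma$: for $w_1,\dots,w_n\in\bigwedge^e\mathbf k^{Me}$ and $S=\{s_1<\dots<s_j\}\subseteq[n]$, put $s(w_S)=\sum_{\tau\in\Sigma_j}w_{s_{\tau(1)}}\otimes\cdots\otimes w_{s_{\tau(j)}}$; $\Delta$ is the linear map with $\Delta(s(w_{[n]}))=\sum_{S\subseteq[n]}s(w_S)\otimes s(w_{[n]\setminus S})$. For $f\otimes b\in\mathcal P^\Sigma\otimes\mathcal P^\Sigma$ and $a_1\otimes a_2$, $(f\otimes b)\ast_g(a_1\otimes a_2):=(f\ast_g a_1)\cdot(b\ast_g a_2)$, extended linearly (terms with mismatched bidegrees vanish). *)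

theory Defs
  imports "HOL-Combinatorics.Permutations"
begin

text \<open>Basis of the exterior power of k^(M d) in degree d: the standard wedge
  v_S = v_s1 wedge ... wedge v_sd (s1 < ... < sd) is identified with the d-subset S
  of [M d] = {1..M*d}.\<close>
definition basisSets :: "nat \<Rightarrow> nat \<Rightarrow> nat set set" where
  "basisSets M d = {S. S \<subseteq> {1..M*d} \<and> card S = d}"

text \<open>Basis of P_{d,n}: length-n lists of such subsets (pure tensors of basis wedges).\<close>
definition tlists :: "nat \<Rightarrow> nat \<Rightarrow> nat \<Rightarrow> nat set list set" where
  "tlists M d n = {xs. length xs = n \<and> set xs \<subseteq> basisSets M d}"

text \<open>An element of P_{d,n} is given by its coefficient function on that basis.\<close>
definition P :: "nat \<Rightarrow> nat \<Rightarrow> nat \<Rightarrow> (nat set list \<Rightarrow> 'k::field) set" where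
  "P M d n = {f. \<forall>xs. xs \<notin> tlists M d n \<longrightarrow> f xs = 0}"

definition PSig :: "nat \<Rightarrow> nat \<Rightarrow> nat \<Rightarrow> (nat set list \<Rightarrow> 'k::field) set" where
  "PSig M d n = {f \<in> P M d n. \<forall>\<sigma> xs. \<sigma> permutes {..<n} \<and> length xs = n
      \<longrightarrow> f (permute_list \<sigma> xs) = f xs}"

definition delta :: "nat set list \<Rightarrow> nat set list \<Rightarrow> 'k::field" where
  "delta x = (\<lambda>z. if z = x then 1 else 0)"

text \<open>Shuffle product of f (n factors) and h (m factors): coefficient of z is the
  sum over splits (A,B) of [n+m] of f(z_A) h(z_B) (0-based positions).\<close>
definition shuffle :: "nat \<Rightarrow> nat \<Rightarrow> (nat set list \<Rightarrow> 'k::field) \<Rightarrow> (nat set list \<Rightarrow> 'k)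
    \<Rightarrow> nat set list \<Rightarrow> 'k" where
  "shuffle n m f h z = (if length z = n + m then
     (\<Sum>A\<in>{A. A \<subseteq> {..<n+m} \<and> card A = n}. f (nths z A) * h (nths z ({..<n+m} - A)))
   else 0)"

text \<open>g^c : [M e] -> [M(d+e)], the increasing bijection onto the complement of g([M d]).\<close>
definition gc :: "nat \<Rightarrow> nat \<Rightarrow> nat \<Rightarrow> (nat \<Rightarrow> nat) \<Rightarrow> nat \<Rightarrow> nat" where
  "gc M d e g i = sorted_list_of_set ({1..M*(d+e)} - g ` {1..M*d}) ! (i - 1)"

text \<open>v_S wedge v_T for disjoint S, T equals (-1)^(#inversions) v_(S union T).\<close>
definition wedge_sign :: "nat set \<Rightarrow> nat set \<Rightarrow> 'k::field" where
  "wedge_sign S T = (-1) ^ card {(a, b). a \<in> S \<and> b \<in> T \<and> b < a}"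

text \<open>(x_1 (x) ... (x) x_n) *_g (y_1 (x) ... (x) y_j) on basis tensors;
  zero if g([Md]) is not inside [M(d+e)] or the numbers of factors differ.\<close>
definition starBasis :: "nat \<Rightarrow> nat \<Rightarrow> nat \<Rightarrow> (nat \<Rightarrow> nat) \<Rightarrow> nat set list \<Rightarrow> nat set list
    \<Rightarrow> nat set list \<Rightarrow> 'k::field" where
  "starBasis M d e g xs ys z =
     (if g ` {1..M*d} \<subseteq> {1..M*(d+e)} \<and> length xs = length ys
         \<and> z = map2 (\<lambda>S T. g ` S \<union> gc M d e g ` T) xs ys
      then (\<Prod>i<length xs. wedge_sign (g ` (xs ! i)) (gc M d e g ` (ys ! i)))
      else 0)"

definition star :: "nat \<Rightarrow> nat \<Rightarrow> nat \<Rightarrow> (nat \<Rightarrow> nat) \<Rightarrow> nat \<Rightarrow> nat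
    \<Rightarrow> (nat set list \<Rightarrow> 'k::field) \<Rightarrow> (nat set list \<Rightarrow> 'k) \<Rightarrow> nat set list \<Rightarrow> 'k" where
  "star M d e g n j f h z =
     (\<Sum>xs\<in>tlists M d n. \<Sum>ys\<in>tlists M e j. f xs * h ys * starBasis M d e g xs ys z)"

text \<open>Number of tau in Sigma_j with u_{tau(1)} (x) ... (x) u_{tau(j)} = x, i.e. the
  coefficient of the basis tensor x in the symmetrisation s(u).\<close>
definition symm_count :: "nat set list \<Rightarrow> nat set list \<Rightarrow> nat" where
  "symm_count u x = card {\<tau>. \<tau> permutes {..<length u} \<and> permute_list \<tau> u = x}"

text \<open>Coefficient of x (x) y in Delta(s(z)) = sum_S s(z_S) (x) s(z_{[N]-S}).\<close>
definition coprod_s :: "nat \<Rightarrow> nat set list \<Rightarrow> nat set list \<times> nat set list \<Rightarrow> 'k::field" where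
  "coprod_s N z xy = (\<Sum>S\<in>Pow {..<N}.
      of_nat (symm_count (nths z S) (fst xy) * symm_count (nths z ({..<N} - S)) (snd xy)))"

text \<open>Delta on P^Sigma_{e,N}: since (char 0) a = (1/N!) sum_z a(z) s(z) for symmetric a,
  linearity gives Delta(a) = (1/N!) sum_z a(z) Delta(s(z)).  Elements of
  P^Sigma (x) P^Sigma are coefficient functions on pairs of basis tensors.\<close>
definition coprod :: "nat \<Rightarrow> nat \<Rightarrow> nat \<Rightarrow> (nat set list \<Rightarrow> 'k::field)
    \<Rightarrow> nat set list \<times> nat set list \<Rightarrow> 'k" where
  "coprod M e N a xy = (\<Sum>z\<in>tlists M e N. a z / of_nat (fact N) * coprod_s N z xy)"

definition coprodSupp :: "nat \<Rightarrow> nat \<Rightarrow> nat \<Rightarrow> (nat set list \<times> nat set list) set" where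
  "coprodSupp M e N = (\<Union>j\<in>{..N}. tlists M e j \<times> tlists M e (N - j))"

text \<open>(f (x) b) *_g D := sum over (x,y) of D(x,y) (f *_g x) . (b *_g y),
  with f in P_{d,n}, b in P_{d,m}.\<close>
definition tstar :: "nat \<Rightarrow> nat \<Rightarrow> nat \<Rightarrow> (nat \<Rightarrow> nat) \<Rightarrow> nat \<Rightarrow> nat
    \<Rightarrow> (nat set list \<Rightarrow> 'k::field) \<Rightarrow> (nat set list \<Rightarrow> 'k) \<Rightarrow> nat
    \<Rightarrow> (nat set list \<times> nat set list \<Rightarrow> 'k) \<Rightarrow> nat set list \<Rightarrow> 'k" where
  "tstar M d e g n m f b N D z = (\<Sum>xy\<in>coprodSupp M e N. D xy *
      shuffle n m (star M d e g n (length (fst xy)) f (delta (fst xy)))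
                  (star M d e g m (length (snd xy)) b (delta (snd xy))) z)"

end

theory Submission
  imports Defs
begin

lemma nths_inter_len: "nths xs I = nths xs (I \<inter> {..<length xs})"
  unfolding nths_def by (rule arg_cong[where f="map fst"], rule filter_cong) (auto dest: set_zip_rightD)

lemma nths_diff_compl: "nths xs ({..<length xs} - A) = nths xs (- A)"
  by (metis nths_inter_len Diff_eq Int_commute)

lemma mset_nths_split: "mset xs = mset (nths xs A) + mset (nths xs (- A))"
proof (induction xs arbitrary: A)
  case Nil then show ?case by simp
next
  case (Cons x xs)
  have e: "{j. Suc j \<in> - A} = - {j. Suc j \<in> A}" by auto
  have h: "- {j. Suc j \<in> A} = {j. Suc j \<notin> A}" by auto
  show ?case using Cons[of "{j. Suc j \<in> A}"] by (simp add: nths_Cons e h)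
qed

lemma nths_eq_split: "length xs = length ys \<Longrightarrow> nths xs A = nths ys A \<Longrightarrow> nths xs (- A) = nths ys (- A) \<Longrightarrow> xs = ys"
proof (induction xs arbitrary: ys A)
  case Nil then show ?case by simp
next
  case (Cons x xs)
  then obtain y ys' where ys: "ys = y # ys'" by (cases ys) auto
  have e: "{j. Suc j \<in> - A} = - {j. Suc j \<in> A}" by auto
  from Cons.prems have "x = y" "nths xs {j. Suc j \<in> A} = nths ys' {j. Suc j \<in> A}"
     "nths xs {j. Suc j \<notin> A} = nths ys' {j. Suc j \<notin> A}"
    by (auto simp: ys nths_Cons e split: if_splits)
  have h: "- {j. Suc j \<in> A} = {j. Suc j \<notin> A}" by auto
  then show ?case using Cons.IH[of ys' "{j. Suc j \<in> A}"] Cons.prems \<open>x = y\<close> \<open>nths xs {j. Suc j \<in> A} = nths ys' {j. Suc j \<in> A}\<close>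
     \<open>nths xs {j. Suc j \<notin> A} = nths ys' {j. Suc j \<notin> A}\<close> by (simp add: ys h)
qed

lemma nths_zip: "length xs = length ys \<Longrightarrow> nths (zip xs ys) A = zip (nths xs A) (nths ys A)"
proof (induction xs arbitrary: ys A)
  case Nil then show ?case by simp
next
  case (Cons x xs)
  then obtain y ys' where ys: "ys = y # ys'" by (cases ys) auto
  show ?case using Cons by (simp add: ys nths_Cons)
qed

lemma nths_merge_ex:
  "length u = card {i. i < k \<and> i \<in> A} \<Longrightarrow> length v = card {i. i < k \<and> i \<notin> A}
   \<Longrightarrow> \<exists>x. length x = k \<and> nths x A = u \<and> nths x (- A) = v"
proof (induction k arbitrary: u v)
  case 0 then show ?case by simp
next
  case (Suc k)
  show ?case
  proof (cases "k \<in> A")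
    case True
    have c1: "{i. i < Suc k \<and> i \<in> A} = insert k {i. i < k \<and> i \<in> A}" using True by auto
    have c2: "{i. i < Suc k \<and> i \<notin> A} = {i. i < k \<and> i \<notin> A}" using True by (auto simp: less_Suc_eq)
    from Suc.prems c1 have "length u = Suc (card {i. i < k \<and> i \<in> A})" by simp
    then obtain u' c where u: "u = u' @ [c]" by (metis length_Suc_conv_rev)
    with Suc.prems c1 c2 obtain x where x: "length x = k" "nths x A = u'" "nths x (- A) = v"
      using Suc.IH[of u' v] by auto
    show ?thesis using x True by (intro exI[of _ "x @ [c]"]) (simp add: nths_append u)
  next
    case False
    have c1: "{i. i < Suc k \<and> i \<notin> A} = insert k {i. i < k \<and> i \<notin> A}" using False by auto
    have c2: "{i. i < Suc k \<and> i \<in> A} = {i. i < k \<and> i \<in> A}" using False by (auto simp: less_Suc_eq)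
    from Suc.prems c1 have "length v = Suc (card {i. i < k \<and> i \<notin> A})" by simp
    then obtain v' c where v: "v = v' @ [c]" by (metis length_Suc_conv_rev)
    with Suc.prems c1 c2 obtain x where x: "length x = k" "nths x A = u" "nths x (- A) = v'"
      using Suc.IH[of u v'] by auto
    show ?thesis using x False by (intro exI[of _ "x @ [c]"]) (simp add: nths_append v)
  qed
qed

lemma prod_list_nths_split: "prod_list (xs :: 'a::comm_monoid_mult list) = prod_list (nths xs A) * prod_list (nths xs (- A))"
  by (metis mset_nths_split prod_mset_prod_list prod_mset.union)

lemma prod_idx_map2: "length xs = length ys \<Longrightarrow> (\<Prod>i<length xs. w (xs ! i) (ys ! i)) = prod_list (map2 w xs ys)"
  by (simp add: prod.list_conv_set_nth lessThan_atLeast0)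

lemma sb_split:
  assumes "length x = N" "length y = N" "length z = N"
  shows "starBasis M d e g x y z = (starBasis M d e g (nths x A) (nths y A) (nths z A) :: 'k::field)
      * starBasis M d e g (nths x (- A)) (nths y (- A)) (nths z (- A))"
proof -
  define h where "h = (\<lambda>S T. g ` S \<union> gc M d e g ` T)"
  define w where "w = (\<lambda>S T. wedge_sign (g ` S) (gc M d e g ` T) :: 'k)"
  have len: "length (nths y B) = length (nths x B)" for B using assms by (simp add: length_nths)
  have zeq: "(z = map2 h x y) \<longleftrightarrow> (nths z A = map2 h (nths x A) (nths y A) \<and> nths z (- A) = map2 h (nths x (- A)) (nths y (- A)))"
  proof
    assume "z = map2 h x y" then show "nths z A = map2 h (nths x A) (nths y A) \<and> nths z (- A) = map2 h (nths x (- A)) (nths y (- A))"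
      using assms by (simp add: nths_map nths_zip)
  next
    assume "nths z A = map2 h (nths x A) (nths y A) \<and> nths z (- A) = map2 h (nths x (- A)) (nths y (- A))"
    then show "z = map2 h x y"
      using assms by (intro nths_eq_split[of z _ A]) (simp_all add: nths_map nths_zip)
  qed
  have pr: "prod_list (map2 w x y) = prod_list (map2 w (nths x A) (nths y A)) * prod_list (map2 w (nths x (- A)) (nths y (- A)))"
    using prod_list_nths_split[of "map2 w x y" A] assms by (simp add: nths_map nths_zip)
  have p: "(\<Prod>i<length xs. wedge_sign (g ` (xs ! i)) (gc M d e g ` (ys ! i))) = prod_list (map2 w xs ys)"
    if "length xs = length ys" for xs ys
    using prod_idx_map2[OF that, of w] by (simp add: w_def)
  have px: "(\<Prod>i<N. wedge_sign (g ` (x ! i)) (gc M d e g ` (y ! i))) = prod_list (map2 w x y)"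
    using p[of x y] assms by simp
  have hh: "(\<lambda>S T. g ` S \<union> gc M d e g ` T) = h" by (simp add: h_def)
  show ?thesis
    unfolding starBasis_def hh
    using assms len zeq pr
    by (simp add: p px del: nths_map)
qed

lemma tlists_bij:
  assumes "A \<subseteq> {..<N}" "card A = n" "N = n + m"
  shows "bij_betw (\<lambda>x. (nths x A, nths x ({..<N} - A))) (tlists M k N) (tlists M k n \<times> tlists M k m)"
proof -
  have cA: "card {i. i < N \<and> i \<in> A} = n"
  proof -
    have "{i. i < N \<and> i \<in> A} = A" using assms(1) by auto
    then show ?thesis using assms by simp
  qed
  have e2: "{i. i < N \<and> i \<notin> A} = {..<N} - A" by auto
  have fin: "finite A" using assms(1) finite_subset by blast
  have cB: "card {i. i < N \<and> i \<notin> A} = m" unfolding e2 using assms fin by (simp add: card_Diff_subset)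
  have cB': "card {i. i < N \<and> i \<in> {..<N} - A} = m" proof -
    have "{i. i < N \<and> i \<in> {..<N} - A} = {i. i < N \<and> i \<notin> A}" by auto
    then show ?thesis using cB by simp
  qed
  show ?thesis
  proof (rule bij_betwI')
    fix x y assume "x \<in> tlists M k N" "y \<in> tlists M k N"
    then have l: "length x = N" "length y = N" by (auto simp: tlists_def)
    show "((nths x A, nths x ({..<N} - A)) = (nths y A, nths y ({..<N} - A))) = (x = y)"
    proof
      assume "(nths x A, nths x ({..<N} - A)) = (nths y A, nths y ({..<N} - A))"
      then have "nths x A = nths y A" "nths x (- A) = nths y (- A)"
        using nths_diff_compl[of x A] nths_diff_compl[of y A] l by auto
      then show "x = y" using nths_eq_split[of x y A] l by simp
    qed simp
  next
    fix x assume "x \<in> tlists M k N"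
    then have l: "length x = N" "set x \<subseteq> basisSets M k" by (auto simp: tlists_def)
    have "length (nths x A) = n" "length (nths x ({..<N} - A)) = m"
      using cA cB' l by (simp_all add: length_nths)
    moreover have "set (nths x A) \<subseteq> basisSets M k" "set (nths x ({..<N} - A)) \<subseteq> basisSets M k"
      using l(2) set_nths_subset[of x] by (meson order_trans)+
    ultimately show "(nths x A, nths x ({..<N} - A)) \<in> tlists M k n \<times> tlists M k m"
      by (simp add: tlists_def)
  next
    fix uv assume uv: "uv \<in> tlists M k n \<times> tlists M k m"
    obtain u v where [simp]: "uv = (u, v)" by fastforce
    from uv have u: "length u = n" "set u \<subseteq> basisSets M k" and v: "length v = m" "set v \<subseteq> basisSets M k"
      by (auto simp: tlists_def)
    obtain x where x: "length x = N" "nths x A = u" "nths x (- A) = v"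
      using nths_merge_ex[of u N A v] u v cA cB by auto
    have "set x \<subseteq> basisSets M k"
    proof -
      have "set_mset (mset x) = set_mset (mset (nths x A) + mset (nths x (- A)))"
        by (rule arg_cong[OF mset_nths_split])
      then have "set x = set u \<union> set v" using x by simp
      then show ?thesis using u v by simp
    qed
    then show "\<exists>x\<in>tlists M k N. uv = (nths x A, nths x ({..<N} - A))"
    proof -
      have "nths x ({..<N} - A) = v" using nths_diff_compl[of x A] x by simp
      then show ?thesis using x \<open>set x \<subseteq> basisSets M k\<close> by (intro bexI[of _ x]) (auto simp: tlists_def)
    qed
  qed
qed

lemma finite_tlists: "finite (tlists M k n)"
proof -
  have "finite (basisSets M k)" unfolding basisSets_def by (rule finite_subset[of _ "Pow {1..M*k}"]) auto
  moreover have "tlists M k n = {xs. set xs \<subseteq> basisSets M k \<and> length xs = n}" by (auto simp: tlists_def)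
  ultimately show ?thesis using finite_lists_length_eq by simp
qed

lemma perm_list_iff:
  assumes "\<tau> permutes {..<n}" "length u = n" "length w = n"
  shows "(permute_list \<tau> u = w) \<longleftrightarrow> (u = permute_list (inv \<tau>) w)"
proof
  assume h: "permute_list \<tau> u = w"
  have "u = permute_list (\<tau> \<circ> inv \<tau>) u" using permutes_inv_o(1)[OF assms(1)] by simp
  also have "\<dots> = permute_list (inv \<tau>) (permute_list \<tau> u)"
    by (rule permute_list_compose) (use permutes_inv[OF assms(1)] assms(2) in simp)
  finally show "u = permute_list (inv \<tau>) w" using h by simp
next
  assume h: "u = permute_list (inv \<tau>) w"
  have "permute_list \<tau> (permute_list (inv \<tau>) w) = permute_list (inv \<tau> \<circ> \<tau>) w"
    by (rule permute_list_compose[symmetric]) (use assms(1,3) in simp)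
  also have "\<dots> = w" using permutes_inv_o(2)[OF assms(1)] by simp
  finally show "permute_list \<tau> u = w" using h by simp
qed

lemma sum_symm_count:
  assumes "w \<in> tlists M k n"
  shows "(\<Sum>u\<in>tlists M k n. symm_count u w) = fact n"
proof -
  have lw: "length w = n" "set w \<subseteq> basisSets M k" using assms by (auto simp: tlists_def)
  define P where "P = {\<tau>. \<tau> permutes {..<n}}"
  have finP: "finite P" unfolding P_def by (rule finite_permutations) simp
  have "(\<Sum>u\<in>tlists M k n. symm_count u w) = (\<Sum>u\<in>tlists M k n. \<Sum>\<tau>\<in>P. if permute_list \<tau> u = w then 1 else 0)"
  proof (rule sum.cong[OF refl])
    fix u assume "u \<in> tlists M k n"
    then have "length u = n" by (simp add: tlists_def)
    then have "symm_count u w = card {\<tau>\<in>P. permute_list \<tau> u = w}"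
      by (simp add: symm_count_def P_def)
    also have "\<dots> = (\<Sum>\<tau>\<in>P. if permute_list \<tau> u = w then 1 else 0)"
      using sum.inter_filter[OF finP, of "\<lambda>_. 1::nat" "\<lambda>\<tau>. permute_list \<tau> u = w"] by simp
    finally show "symm_count u w = (\<Sum>\<tau>\<in>P. if permute_list \<tau> u = w then 1 else 0)" .
  qed
  also have "\<dots> = (\<Sum>\<tau>\<in>P. \<Sum>u\<in>tlists M k n. if permute_list \<tau> u = w then 1 else 0)"
    by (rule sum.swap)
  also have "\<dots> = (\<Sum>\<tau>\<in>P. 1)"
  proof (rule sum.cong[OF refl])
    fix \<tau> assume t: "\<tau> \<in> P"
    then have tp: "\<tau> permutes {..<n}" by (simp add: P_def)
    have mem: "permute_list (inv \<tau>) w \<in> tlists M k n"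
      using lw permutes_inv[OF tp] by (simp add: tlists_def)
    have "(\<Sum>u\<in>tlists M k n. (if permute_list \<tau> u = w then 1 else 0::nat))
        = (\<Sum>u\<in>tlists M k n. if u = permute_list (inv \<tau>) w then 1 else 0)"
      by (rule sum.cong[OF refl]) (use perm_list_iff[OF tp _ lw(1)] in \<open>auto simp: tlists_def\<close>)
    also have "\<dots> = 1" using mem finite_tlists by simp
    finally show "(\<Sum>u\<in>tlists M k n. (if permute_list \<tau> u = w then 1 else 0::nat)) = 1" .
  qed
  also have "\<dots> = fact n" using card_permutations[of "{..<n}" n] by (simp add: P_def)
  finally show ?thesis .
qed

lemma symm_count_mset: "symm_count u x \<noteq> 0 \<Longrightarrow> mset u = mset x"
proof -
  assume "symm_count u x \<noteq> 0"
  then obtain \<tau> where "\<tau> permutes {..<length u}" "permute_list \<tau> u = x"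
    unfolding symm_count_def by (metis (mono_tags, lifting) card.empty empty_Collect_eq)
  then show ?thesis using mset_permute_list by metis
qed

lemma card_lt_set: "S \<subseteq> {..<N} \<Longrightarrow> card {i. i < N \<and> i \<in> S} = card S"
proof -
  assume "S \<subseteq> {..<N}"
  then have "{i. i < N \<and> i \<in> S} = S" by auto
  then show ?thesis by simp
qed

lemma coprod_val:
  fixes a :: "nat set list \<Rightarrow> 'k::field_char_0"
  assumes a: "a \<in> PSig M e N" and y: "y \<in> tlists M e N"
    and A: "A \<subseteq> {..<N}" "card A = n" "N = n + m"
  shows "coprod M e N a (nths y A, nths y ({..<N} - A)) = a y"
proof -
  define yA where "yA = nths y A"
  define yB where "yB = nths y ({..<N} - A)"
  have ly: "length y = N" using y by (simp add: tlists_def)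
  have yAB: "yA \<in> tlists M e n" "yB \<in> tlists M e m"
    using bij_betwE[OF tlists_bij[OF A, of M e]] y by (auto simp: yA_def yB_def)
  have lyA: "length yA = n" using yAB by (simp add: tlists_def)
  define W where "W z = (\<Sum>S\<in>Pow {..<N}. symm_count (nths z S) yA * symm_count (nths z ({..<N} - S)) yB)" for z
  have cs: "coprod_s N z (yA, yB) = (of_nat (W z) :: 'k)" for z by (simp add: coprod_s_def W_def)
  have az: "a z = a y" if z: "z \<in> tlists M e N" and W: "W z \<noteq> 0" for z
  proof -
    obtain S where S: "S \<in> Pow {..<N}" "symm_count (nths z S) yA * symm_count (nths z ({..<N} - S)) yB \<noteq> 0"
      using W unfolding W_def by (meson sum.not_neutral_contains_not_neutral)
    have lz: "length z = N" using z by (simp add: tlists_def)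
    have m1: "mset (nths z S) = mset yA" "mset (nths z ({..<N} - S)) = mset yB"
      using S(2) symm_count_mset by auto
    have "mset z = mset (nths z S) + mset (nths z (- S))" by (rule mset_nths_split)
    also have "\<dots> = mset yA + mset yB" using m1 nths_diff_compl[of z S] lz by simp
    also have "\<dots> = mset y" using mset_nths_split[of y A] nths_diff_compl[of y A] ly
      by (simp add: yA_def yB_def)
    finally have "mset z = mset y" .
    then obtain p where p: "p permutes {..<length y}" "permute_list p y = z" by (rule mset_eq_permutation)
    then show ?thesis using a ly by (auto simp: PSig_def)
  qed
  have inner: "(\<Sum>z\<in>tlists M e N. symm_count (nths z S) yA * symm_count (nths z ({..<N} - S)) yB)
      = (if card S = n then fact n * fact m else 0)" if S: "S \<subseteq> {..<N}" for S
  proof (cases "card S = n")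
    case True
    have bij: "bij_betw (\<lambda>x. (nths x S, nths x ({..<N} - S))) (tlists M e N) (tlists M e n \<times> tlists M e m)"
      by (rule tlists_bij) (use S True A in auto)
    have "(\<Sum>z\<in>tlists M e N. symm_count (nths z S) yA * symm_count (nths z ({..<N} - S)) yB)
        = (\<Sum>uv\<in>tlists M e n \<times> tlists M e m. symm_count (fst uv) yA * symm_count (snd uv) yB)"
      using sum.reindex_bij_betw[OF bij, of "\<lambda>uv. symm_count (fst uv) yA * symm_count (snd uv) yB"] by simp
    also have "\<dots> = (\<Sum>u\<in>tlists M e n. \<Sum>v\<in>tlists M e m. symm_count u yA * symm_count v yB)"
      by (simp add: sum.cartesian_product case_prod_beta)
    also have "\<dots> = (\<Sum>u\<in>tlists M e n. symm_count u yA) * (\<Sum>v\<in>tlists M e m. symm_count v yB)"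
      by (simp add: sum_product)
    also have "\<dots> = fact n * fact m" using sum_symm_count yAB by simp
    finally show ?thesis using True by simp
  next
    case False
    have "symm_count (nths z S) yA = 0" if "z \<in> tlists M e N" for z
    proof (rule ccontr)
      assume "symm_count (nths z S) yA \<noteq> 0"
      then have "length (nths z S) = length yA" using symm_count_mset mset_eq_length by metis
      moreover have "length (nths z S) = card S" using that S card_lt_set[OF S] by (simp add: tlists_def length_nths)
      ultimately show False using False lyA by simp
    qed
    then show ?thesis using False by simp
  qed
  have sumW: "(\<Sum>z\<in>tlists M e N. W z) = fact N"
  proof -
    have "(\<Sum>z\<in>tlists M e N. W z) = (\<Sum>S\<in>Pow {..<N}. \<Sum>z\<in>tlists M e N. symm_count (nths z S) yA * symm_count (nths z ({..<N} - S)) yB)"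
      unfolding W_def by (rule sum.swap)
    also have "\<dots> = (\<Sum>S\<in>Pow {..<N}. if card S = n then fact n * fact m else 0)"
      by (rule sum.cong[OF refl]) (simp add: inner)
    also have "\<dots> = (\<Sum>S\<in>{S\<in>Pow {..<N}. card S = n}. fact n * fact m)"
      by (rule sum.inter_filter[symmetric]) simp
    also have "\<dots> = card {S. S \<subseteq> {..<N} \<and> card S = n} * (fact n * fact m)"
      by (simp add: Pow_def)
    also have "\<dots> = (N choose n) * (fact n * fact m)" using n_subsets[of "{..<N}" n] by simp
    also have "\<dots> = fact N" using binomial_fact_lemma[of n N] A(3) by (simp add: algebra_simps)
    finally show ?thesis .
  qed
  have "coprod M e N a (yA, yB) = (\<Sum>z\<in>tlists M e N. a z / of_nat (fact N) * of_nat (W z))"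
    by (simp add: coprod_def cs)
  also have "\<dots> = (\<Sum>z\<in>tlists M e N. a y / of_nat (fact N) * of_nat (W z))"
    by (rule sum.cong[OF refl]) (use az in force)
  also have "\<dots> = a y / of_nat (fact N) * of_nat (\<Sum>z\<in>tlists M e N. W z)"
    by (simp add: sum_distrib_left)
  also have "\<dots> = a y" using sumW by simp
  finally show ?thesis by (simp add: yA_def yB_def)
qed

lemma star_delta:
  assumes "x' \<in> tlists M e j"
  shows "star M d e g n j f (delta x') w = (\<Sum>u\<in>tlists M d n. f u * starBasis M d e g u x' w)"
  unfolding star_def
proof (rule sum.cong[OF refl])
  fix u
  have "(\<Sum>ys\<in>tlists M e j. f u * delta x' ys * starBasis M d e g u ys w)
      = (\<Sum>ys\<in>tlists M e j. if ys = x' then f u * starBasis M d e g u x' w else 0)"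
    by (rule sum.cong[OF refl]) (simp add: delta_def)
  also have "\<dots> = f u * starBasis M d e g u x' w" using assms finite_tlists by simp
  finally show "(\<Sum>ys\<in>tlists M e j. f u * delta x' ys * starBasis M d e g u ys w) = f u * starBasis M d e g u x' w" .
qed

lemma sb_len: "starBasis M d e g x y z \<noteq> 0 \<Longrightarrow> length x = length y \<and> length z = length x"
  by (auto simp: starBasis_def split: if_splits)

theorem mainTheorem15:
  fixes M d e n m :: nat and g :: "nat \<Rightarrow> nat"
    and f b a :: "nat set list \<Rightarrow> 'k::field_char_0"
  assumes "strict_mono g"
    and "f \<in> PSig M d n" and "b \<in> PSig M d m" and "a \<in> PSig M e (n + m)"
  shows "star M d e g (n + m) (n + m) (shuffle n m f b) a
         = tstar M d e g n m f b (n + m) (coprod M e (n + m) a)"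
proof (rule ext)
  fix z
  define N where "N = n + m"
  define AA where "AA = {A. A \<subseteq> {..<N} \<and> card A = n}"
  define sb where "sb = (starBasis M d e g :: _ \<Rightarrow> _ \<Rightarrow> _ \<Rightarrow> 'k)"
  define D where "D = coprod M e N a"
  define F1 where "F1 xy = star M d e g n (length (fst xy)) f (delta (fst xy))" for xy :: "nat set list \<times> nat set list"
  define F2 where "F2 xy = star M d e g m (length (snd xy)) b (delta (snd xy))" for xy :: "nat set list \<times> nat set list"
  have finAA: "finite AA" unfolding AA_def by (rule finite_subset[of _ "Pow {..<N}"]) auto
  have LHS: "star M d e g N N (shuffle n m f b) a z
     = (\<Sum>x\<in>tlists M d N. \<Sum>y\<in>tlists M e N. shuffle n m f b x * a y * sb x y z)"
    by (simp add: star_def sb_def)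
  have RHS: "tstar M d e g n m f b N D z = (\<Sum>xy\<in>coprodSupp M e N. D xy * shuffle n m (F1 xy) (F2 xy) z)"
    by (simp add: tstar_def F1_def F2_def)
  show "star M d e g (n + m) (n + m) (shuffle n m f b) a z = tstar M d e g n m f b (n + m) (coprod M e (n + m) a) z"
  proof (cases "length z = N")
    case False
    have "sb x y z = 0" if "x \<in> tlists M d N" for x y
      using sb_len[of M d e g x y z] that False by (auto simp: sb_def tlists_def)
    then have "star M d e g N N (shuffle n m f b) a z = 0" unfolding LHS by simp
    moreover have "tstar M d e g n m f b N D z = 0" unfolding RHS using False
      by (simp add: shuffle_def N_def)
    ultimately show ?thesis by (simp add: N_def D_def)
  next
    case True
    define Ac where "Ac A = {..<N} - A" for A :: "nat set"
    have shx: "shuffle n m f b x = (\<Sum>A\<in>AA. f (nths x A) * b (nths x (Ac A)))" if "x \<in> tlists M d N" for x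
      using that by (simp add: shuffle_def tlists_def AA_def Ac_def N_def)
    have L1: "star M d e g N N (shuffle n m f b) a z
       = (\<Sum>A\<in>AA. \<Sum>x\<in>tlists M d N. \<Sum>y\<in>tlists M e N. f (nths x A) * b (nths x (Ac A)) * a y * sb x y z)"
    proof -
      have "star M d e g N N (shuffle n m f b) a z
         = (\<Sum>x\<in>tlists M d N. \<Sum>y\<in>tlists M e N. \<Sum>A\<in>AA. f (nths x A) * b (nths x (Ac A)) * a y * sb x y z)"
        unfolding LHS by (rule sum.cong[OF refl], rule sum.cong[OF refl]) (simp add: shx sum_distrib_right)
      also have "\<dots> = (\<Sum>x\<in>tlists M d N. \<Sum>A\<in>AA. \<Sum>y\<in>tlists M e N. f (nths x A) * b (nths x (Ac A)) * a y * sb x y z)"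
        by (rule sum.cong[OF refl], rule sum.swap)
      also have "\<dots> = (\<Sum>A\<in>AA. \<Sum>x\<in>tlists M d N. \<Sum>y\<in>tlists M e N. f (nths x A) * b (nths x (Ac A)) * a y * sb x y z)"
        by (rule sum.swap)
      finally show ?thesis .
    qed
    have R1: "tstar M d e g n m f b N D z
       = (\<Sum>A\<in>AA. \<Sum>xy\<in>coprodSupp M e N. D xy * (F1 xy (nths z A) * F2 xy (nths z (Ac A))))"
      unfolding RHS using True
      by (simp add: shuffle_def AA_def Ac_def N_def sum_distrib_left) (rule sum.swap)
    have perA: "(\<Sum>x\<in>tlists M d N. \<Sum>y\<in>tlists M e N. f (nths x A) * b (nths x (Ac A)) * a y * sb x y z)
      = (\<Sum>xy\<in>coprodSupp M e N. D xy * (F1 xy (nths z A) * F2 xy (nths z (Ac A))))" if A: "A \<in> AA" for A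
    proof -
      have As: "A \<subseteq> {..<N}" "card A = n" "N = n + m" using A by (auto simp: AA_def N_def)
      define psi where "psi x = (nths x A, nths x (Ac A))" for x :: "nat set list"
      have bijd: "bij_betw psi (tlists M d N) (tlists M d n \<times> tlists M d m)"
        unfolding psi_def Ac_def by (rule tlists_bij[OF As])
      have bije: "bij_betw psi (tlists M e N) (tlists M e n \<times> tlists M e m)"
        unfolding psi_def Ac_def by (rule tlists_bij[OF As])
      define zA where "zA = nths z A"
      define zB where "zB = nths z (Ac A)"
      define Phi where "Phi q p = D p * (f (fst q) * b (snd q) * (sb (fst q) (fst p) zA * sb (snd q) (snd p) zB))"
        for q p :: "nat set list \<times> nat set list"
      have lhs1: "(\<Sum>x\<in>tlists M d N. \<Sum>y\<in>tlists M e N. f (nths x A) * b (nths x (Ac A)) * a y * sb x y z)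
         = (\<Sum>x\<in>tlists M d N. \<Sum>y\<in>tlists M e N. Phi (psi x) (psi y))"
      proof (rule sum.cong[OF refl], rule sum.cong[OF refl])
        fix x y assume x: "x \<in> tlists M d N" and y: "y \<in> tlists M e N"
        have lx: "length x = N" and lyy: "length y = N" using x y by (auto simp: tlists_def)
        have ay: "a y = D (psi y)" unfolding D_def psi_def Ac_def
          using coprod_val[of a M e N y A n m] assms(4) y As by (simp add: N_def)
        have c: "nths w (Ac A) = nths w (- A)" if "length w = N" for w :: "nat set list"
          using nths_diff_compl[of w A] that by (simp add: Ac_def)
        have "sb x y z = sb (nths x A) (nths y A) zA * sb (nths x (Ac A)) (nths y (Ac A)) zB"
          unfolding sb_def zA_def zB_def c[OF lx] c[OF lyy] c[OF True]
          by (rule sb_split[OF lx lyy True])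
        then show "f (nths x A) * b (nths x (Ac A)) * a y * sb x y z = Phi (psi x) (psi y)"
          by (simp add: Phi_def psi_def ay mult_ac)
      qed
      also have "\<dots> = (\<Sum>y\<in>tlists M e N. \<Sum>x\<in>tlists M d N. Phi (psi x) (psi y))"
        by (rule sum.swap)
      also have "\<dots> = (\<Sum>y\<in>tlists M e N. \<Sum>q\<in>tlists M d n \<times> tlists M d m. Phi q (psi y))"
        by (rule sum.cong[OF refl]) (rule sum.reindex_bij_betw[OF bijd])
      also have "\<dots> = (\<Sum>p\<in>tlists M e n \<times> tlists M e m. \<Sum>q\<in>tlists M d n \<times> tlists M d m. Phi q p)"
        by (rule sum.reindex_bij_betw[OF bije, where g="\<lambda>p. \<Sum>q\<in>tlists M d n \<times> tlists M d m. Phi q p"])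
      finally have lhs: "(\<Sum>x\<in>tlists M d N. \<Sum>y\<in>tlists M e N. f (nths x A) * b (nths x (Ac A)) * a y * sb x y z)
        = (\<Sum>p\<in>tlists M e n \<times> tlists M e m. \<Sum>q\<in>tlists M d n \<times> tlists M d m. Phi q p)" .
      have finS: "finite (coprodSupp M e N)" unfolding coprodSupp_def using finite_tlists by auto
      have sub: "tlists M e n \<times> tlists M e m \<subseteq> coprodSupp M e N"
        unfolding coprodSupp_def using As by (intro subsetI UN_I[of n]) auto
      have zero: "D xy * (F1 xy zA * F2 xy zB) = 0" if "xy \<in> coprodSupp M e N - tlists M e n \<times> tlists M e m" for xy
      proof -
        from that obtain j where j: "fst xy \<in> tlists M e j" "snd xy \<in> tlists M e (N - j)" "j \<le> N"
          unfolding coprodSupp_def by (auto simp: mem_Times_iff)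
        have "j \<noteq> n" using that j As by (auto simp: mem_Times_iff)
        have lj: "length (fst xy) = j" using j by (simp add: tlists_def)
        have "F1 xy zA = (\<Sum>u\<in>tlists M d n. f u * starBasis M d e g u (fst xy) zA)"
          unfolding F1_def lj by (rule star_delta[OF j(1)])
        also have "\<dots> = 0"
        proof (rule sum.neutral, rule ballI)
          fix u assume "u \<in> tlists M d n"
          then have "length u = n" by (simp add: tlists_def)
          then have "starBasis M d e g u (fst xy) zA = (0::'k)" using sb_len[of M d e g u "fst xy" zA] lj \<open>j \<noteq> n\<close> by auto
          then show "f u * starBasis M d e g u (fst xy) zA = 0" by simp
        qed
        finally show ?thesis by simp
      qed
      have rhs1: "(\<Sum>xy\<in>coprodSupp M e N. D xy * (F1 xy zA * F2 xy zB))
          = (\<Sum>p\<in>tlists M e n \<times> tlists M e m. D p * (F1 p zA * F2 p zB))"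
        by (rule sum.mono_neutral_right[OF finS sub]) (use zero in blast)
      also have "\<dots> = (\<Sum>p\<in>tlists M e n \<times> tlists M e m. \<Sum>q\<in>tlists M d n \<times> tlists M d m. Phi q p)"
      proof (rule sum.cong[OF refl])
        fix p assume p: "p \<in> tlists M e n \<times> tlists M e m"
        then have p1: "fst p \<in> tlists M e n" and p2: "snd p \<in> tlists M e m" by (auto simp: mem_Times_iff)
        have l1: "length (fst p) = n" "length (snd p) = m" using p1 p2 by (auto simp: tlists_def)
        have e1: "F1 p zA = (\<Sum>u\<in>tlists M d n. f u * sb u (fst p) zA)"
          unfolding F1_def l1 sb_def by (rule star_delta[OF p1])
        have e2: "F2 p zB = (\<Sum>v\<in>tlists M d m. b v * sb v (snd p) zB)"
          unfolding F2_def l1 sb_def by (rule star_delta[OF p2])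
        have "F1 p zA * F2 p zB
           = (\<Sum>u\<in>tlists M d n. \<Sum>v\<in>tlists M d m. (f u * sb u (fst p) zA) * (b v * sb v (snd p) zB))"
          by (simp only: e1 e2 sum_product)
        then have "D p * (F1 p zA * F2 p zB)
           = (\<Sum>u\<in>tlists M d n. \<Sum>v\<in>tlists M d m. D p * ((f u * sb u (fst p) zA) * (b v * sb v (snd p) zB)))"
          by (simp add: sum_distrib_left)
        also have "\<dots> = (\<Sum>q\<in>tlists M d n \<times> tlists M d m. Phi q p)"
          by (simp add: sum.cartesian_product Phi_def case_prod_beta mult_ac)
        finally show "D p * (F1 p zA * F2 p zB) = (\<Sum>q\<in>tlists M d n \<times> tlists M d m. Phi q p)" .
      qed
      finally show ?thesis using lhs by (simp add: zA_def zB_def)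
    qed
    have "star M d e g N N (shuffle n m f b) a z = tstar M d e g n m f b N D z"
      unfolding L1 R1 by (rule sum.cong[OF refl]) (rule perA)
    then show ?thesis by (simp add: N_def D_def)
  qed
qed

end
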